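(* Let $C=\{c_1,\dots,c_m\}$ with $m\ge 2$, let $\mathcal{T}$ be a rooted ordered tree whose leaves are exactly the candidates of $C$, and let $F$ be the frequency matrix of the distribution $\mathcal{D}_{\mathrm{GS}}^{\mathcal{T}}$, with rows indexed by positions $1,\dots,m$ and columns indexed by candidates $c_1,\dots,c_m$. (1) If $\mathcal{T}=\mathrm{Flat}(c_1,\dots,c_m)$, then $F=\mathrm{AN}$, i.e., the entry of $F$ for position $i$ and candidate $c_j$ equals $\tfrac12\mathbb{1}_{i=j}+\tfrac12\mathbb{1}_{i=m-j+1}$. (2) If $m$ is a power of two and $\mathcal{T}=\mathrm{Bal}(c_1,\dots,c_m)$, then $F=\mathrm{UN}$, the $m\times m$ matrix with all entries $1/m$. (3) If $\mathcal{T}=\mathrm{CP}(c_1,\dots,c_m)$, then for each $j\in[m]$ and $i\in[m]$, the probability that $c_j$ appears in position $i$ in a vote sampled from $\mathcal{D}_{\mathrm{GS}}^{\mathcal{T}}$ is \[\frac{1}{2^j}\binom{j-1}{i-1}\mathbb{1}_{i\le j}+\frac{1}{2^j}\binom{j-1}{(i-1)-(m-j)}\mathbb{1}_{i>m-j}.\]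
   Context: A vote (preference order) over a finite candidate set $C$ is a total order on $C$; position 1 is the top. A vote distribution $\mathcal{D}$ assigns probabilities to all votes over $C$. Its frequency matrix is $\sum_v \mathcal{D}(v)\cdot \#(v)$, where $\#(v)$ is the $m\times m$ permutation matrix whose entry for position $i$ and candidate $c$ is $1$ iff $c$ is in position $i$ in $v$; equivalently, the entry for position $i$ and candidate $c$ is the probability that $c$ is in position $i$ in a vote sampled from $\mathcal{D}$. For a rooted ordered tree $\mathcal{T}$ whose leaves are the candidates, the frontier is the order of leaves from left to right; a vote is consistent with $\mathcal{T}$ if it is the frontier of the tree obtained by reversing the order of children of some set of internal nodes. $\mathcal{D}_{\mathrm{GS}}^{\mathcal{T}}$ is the uniform distribution over votes consistent with $\mathcal{T}$ (equivalently: reverse each internal node's children independently with probability $1/2$ and output the frontier). $\mathrm{Flat}(c_1,\dots,c_m)$ is the tree with a single internal node (the root) whose children from left to right are $c_1,\dots,c_m$. $\mathrm{Bal}(c_1,\dots,c_m)$ is the perfectly balanced binary tree with frontier $c_1,\dots,c_m$. $\mathrm{CP}(c_1,\dots,c_m)$ (caterpillar) has internal nodes $x_1,\dots,x_{m-1}$, root $x_1$; for $j\in[m-2]$, $x_j$ has left child $c_j$ and right child $x_{j+1}$, and $x_{m-1}$ has children $c_{m-1}$ (left) and $c_m$ (right). $\mathbb{1}$ denotes an indicator. *)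

theory Defs
  imports "HOL-Probability.Probability"
begin

text \<open>Rooted ordered trees whose leaves carry candidates; candidate c_j is the natural number j.\<close>
datatype ltree = Lf nat | Nd "ltree list"

text \<open>Votes consistent with a tree: frontiers obtained by reversing the children
 of some set of internal nodes (the choice at each node is independent).\<close>
fun votes :: "ltree \<Rightarrow> nat list set" where
  "votes (Lf c) = {[c]}"
| "votes (Nd ts) = concat ` listset (map votes ts) \<union> (concat \<circ> rev) ` listset (map votes ts)"

definition D_GS :: "ltree \<Rightarrow> nat list pmf" where
  "D_GS T = pmf_of_set (votes T)"

definition freq :: "ltree \<Rightarrow> nat \<Rightarrow> nat \<Rightarrow> real" where
  "freq T i c = measure_pmf.prob (D_GS T) {v. v ! (i - 1) = c}"

definition Flat :: "nat \<Rightarrow> ltree" where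
  "Flat m = Nd (map Lf [1..<m+1])"

fun balT :: "nat \<Rightarrow> nat \<Rightarrow> ltree" where
  "balT 0 s = Lf s"
| "balT (Suc d) s = Nd [balT d s, balT d (s + 2 ^ d)]"

definition Bal :: "nat \<Rightarrow> ltree" where
  "Bal k = balT k 1"

fun cat :: "nat list \<Rightarrow> ltree" where
  "cat [] = Nd []"
| "cat [a] = Lf a"
| "cat [a, b] = Nd [Lf a, Lf b]"
| "cat (a # b # c # xs) = Nd [Lf a, cat (b # c # xs)]"

definition CP :: "nat \<Rightarrow> ltree" where
  "CP m = cat [1..<m+1]"

end

theory Submission
  imports Defs
begin

definition app2 :: "'a list set \<Rightarrow> 'a list set \<Rightarrow> 'a list set" where
  "app2 A B = (\<lambda>(a,b). a @ b) ` (A \<times> B)"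

lemma listset2: "listset [A,B] = (\<lambda>(a,b). [a,b]) ` (A \<times> B)"
  by (auto simp: set_Cons_def)

lemma votes_Nd2: "votes (Nd [t1,t2]) = app2 (votes t1) (votes t2) \<union> app2 (votes t2) (votes t1)"
proof -
  have "votes (Nd [t1,t2]) = concat ` listset [votes t1, votes t2] \<union> (concat \<circ> rev) ` listset [votes t1, votes t2]"
    by simp
  also have "\<dots> = app2 (votes t1) (votes t2) \<union> app2 (votes t2) (votes t1)"
  proof -
    have 1: "concat ` listset [votes t1, votes t2] = app2 (votes t1) (votes t2)"
      unfolding listset2 app2_def image_image by (simp add: case_prod_unfold)
    have 2: "(concat \<circ> rev) ` listset [votes t1, votes t2] = app2 (votes t2) (votes t1)"
      unfolding listset2 app2_def image_image by (force simp: case_prod_unfold image_iff)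
    show ?thesis using 1 2 by simp
  qed
  finally show ?thesis .
qed

lemma freq_eq:
  assumes "finite (votes T)" "votes T \<noteq> {}"
  shows "freq T i c = card {v\<in>votes T. v ! (i-1) = c} / card (votes T)"
  unfolding freq_def D_GS_def using assms
  by (simp add: measure_pmf_of_set Int_def conj_commute)

lemma inj_app2:
  assumes "\<forall>a\<in>A. length a = la"
  shows "inj_on (\<lambda>(a,b). a @ b) (A \<times> B)"
  using assms by (auto simp: inj_on_def)

lemma finite_app2: "finite A \<Longrightarrow> finite B \<Longrightarrow> finite (app2 A B)"
  by (simp add: app2_def)

lemma card_app2:
  assumes "\<forall>a\<in>A. length a = la"
  shows "card (app2 A B) = card A * card B"
  unfolding app2_def using card_image[OF inj_app2[OF assms, of B]] by (simp add: card_cartesian_product)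

lemma card_app2_nth:
  assumes "\<forall>a\<in>A. length a = la"
  shows "card {v\<in>app2 A B. v ! k = c} =
    (if k < la then card {a\<in>A. a ! k = c} * card B else card A * card {b\<in>B. b ! (k - la) = c})"
proof -
  have e: "{v\<in>app2 A B. v ! k = c} = (\<lambda>(a,b). a @ b) ` {p\<in>A \<times> B. (fst p @ snd p) ! k = c}"
    by (auto simp: app2_def)
  have i: "inj_on (\<lambda>(a,b). a @ b) {p\<in>A \<times> B. (fst p @ snd p) ! k = c}"
    using inj_app2[OF assms, of B] by (rule inj_on_subset) auto
  show ?thesis
  proof (cases "k < la")
    case True
    have "{p\<in>A \<times> B. (fst p @ snd p) ! k = c} = {a\<in>A. a ! k = c} \<times> B"
      using True assms by (auto simp: nth_append)
    then show ?thesis using True unfolding e card_image[OF i] by (simp add: card_cartesian_product)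
  next
    case False
    have "{p\<in>A \<times> B. (fst p @ snd p) ! k = c} = A \<times> {b\<in>B. b ! (k - la) = c}"
      using False assms by (auto simp: nth_append)
    then show ?thesis using False unfolding e card_image[OF i] by (simp add: card_cartesian_product)
  qed
qed

lemma listset_sing: "listset (map (\<lambda>x. {[x]}) xs) = {map (\<lambda>x. [x]) xs}"
  by (induction xs) (auto simp: set_Cons_def)

lemma votes_Flat_gen: "votes (Nd (map Lf xs)) = {xs, rev xs}"
proof -
  have "map votes (map Lf xs) = map (\<lambda>x. {[x]}) xs" by simp
  then show ?thesis
    by (simp add: listset_sing rev_map o_def insert_commute)
qed

lemma votes_Flat: "votes (Flat m) = {[1..<m+1], rev [1..<m+1]}"
  unfolding Flat_def by (rule votes_Flat_gen)

lemma I1: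
  fixes a p i :: nat
  assumes "1 \<le> i" "i \<le> a + p + 2"
  shows "((a+1) choose (i-1)) * of_bool (i \<le> a+2) =
     of_bool (i \<ge> 2) * (a choose (i-2)) * of_bool (i \<le> a+2) + of_bool (i \<le> a+1+p) * (a choose (i-1)) * of_bool (i \<le> a+1)"
proof (cases "i = 1")
  case True then show ?thesis by simp
next
  case False
  then obtain b where b: "i = b + 2" using assms by (intro that[of "i-2"]) arith
  show ?thesis using assms unfolding b
    by (auto simp: binomial_Suc_Suc[of a b, simplified Suc_eq_plus1] binomial_eq_0 )
qed

lemma I2:
  fixes a p i :: nat
  assumes "1 \<le> i" "i \<le> a + p + 2"
  shows "((a+1) choose ((i-1)-p)) * of_bool (i > p) =
     of_bool (i \<ge> 2) * (a choose ((i-2)-p)) * of_bool (i > p+1) + of_bool (i \<le> a+1+p) * (a choose ((i-1)-p)) * of_bool (i > p)"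
proof -
  consider "i \<le> p" | "i = p + 1" | b where "i = p + 2 + b"
  proof -
    assume h1: "i \<le> p \<Longrightarrow> thesis" and h2: "i = p + 1 \<Longrightarrow> thesis" and h3: "\<And>b. i = p + 2 + b \<Longrightarrow> thesis"
    show thesis
    proof (cases "i \<le> p + 1")
      case True then show ?thesis using h1 h2 by linarith
    next
      case False then show ?thesis using h3[of "i - p - 2"] by simp
    qed
  qed
  then show ?thesis
  proof cases
    case 3
    show ?thesis using assms unfolding 3
      by (auto simp: binomial_Suc_Suc[of a b, simplified Suc_eq_plus1] binomial_eq_0)
  qed auto
qed

lemma filter_Un_card:
  assumes "finite X" "finite Y" "X \<inter> Y = {}"
  shows "card {v\<in>X \<union> Y. P v} = card {v\<in>X. P v} + card {v\<in>Y. P v}"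
proof -
  have "{v\<in>X \<union> Y. P v} = {v\<in>X. P v} \<union> {v\<in>Y. P v}" by auto
  then show ?thesis using assms by (simp add: card_Un_disjoint disjoint_iff)
qed

lemma coll_eq_if[simp]: "{v. v = x \<and> P v} = (if P x then {x} else {})"
  by auto

lemma bal_inv:
  "finite (votes (balT d s)) \<and> card (votes (balT d s)) = 2 ^ (2 ^ d - 1)
   \<and> (\<forall>v\<in>votes (balT d s). length v = 2 ^ d \<and> set v = {s..<s + 2 ^ d})
   \<and> (\<forall>k<2^d. \<forall>c. 2 ^ d * card {v\<in>votes (balT d s). v ! k = c}
          = (if c \<in> {s..<s + 2 ^ d} then card (votes (balT d s)) else 0))"
proof (induction d arbitrary: s)
  case 0
  then show ?case by auto
next
  case (Suc d)
  define V1 where "V1 = votes (balT d s)"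
  define V2 where "V2 = votes (balT d (s + 2^d))"
  define N where "N = (2::nat) ^ (2 ^ d - 1)"
  have IH1: "finite V1" "card V1 = N" "\<forall>v\<in>V1. length v = 2 ^ d \<and> set v = {s..<s + 2 ^ d}"
     "\<forall>k<2^d. \<forall>c. 2 ^ d * card {v\<in>V1. v ! k = c} = (if c \<in> {s..<s + 2 ^ d} then N else 0)"
    using Suc[of s] unfolding V1_def N_def by auto
  have IH2: "finite V2" "card V2 = N" "\<forall>v\<in>V2. length v = 2 ^ d \<and> set v = {s+2^d..<s + 2^d + 2 ^ d}"
     "\<forall>k<2^d. \<forall>c. 2 ^ d * card {v\<in>V2. v ! k = c} = (if c \<in> {s+2^d..<s + 2^d + 2 ^ d} then N else 0)"
    using Suc[of "s + 2^d"] unfolding V2_def N_def by auto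
  have V: "votes (balT (Suc d) s) = app2 V1 V2 \<union> app2 V2 V1"
    unfolding V1_def V2_def balT.simps by (rule votes_Nd2)
  have l1: "\<forall>a\<in>V1. length a = 2^d" and l2: "\<forall>a\<in>V2. length a = 2^d" using IH1 IH2 by auto
  have disj: "app2 V1 V2 \<inter> app2 V2 V1 = {}"
  proof (rule ccontr)
    assume "app2 V1 V2 \<inter> app2 V2 V1 \<noteq> {}"
    then obtain a b a' b' where ab: "a \<in> V1" "b \<in> V2" "a' \<in> V1" "b' \<in> V2" "a @ b = b' @ a'"
      unfolding app2_def by auto
    then have "a = b'" using l1 l2 by (simp add: append_eq_append_conv)
    then have "set a = {s..<s + 2 ^ d}" "set a = {s+2^d..<s + 2^d + 2 ^ d}" using ab IH1 IH2 by auto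
    then show False by (metis atLeastLessThan_iff le_add1 less_add_same_cancel1 nat_less_le zero_less_numeral zero_less_power order.refl)
  qed
  have fin: "finite (app2 V1 V2)" "finite (app2 V2 V1)" using IH1 IH2 by (auto intro: finite_app2)
  have cardV: "card (votes (balT (Suc d) s)) = 2 * N * N"
    unfolding V using card_Un_disjoint[OF fin disj] card_app2[OF l1] card_app2[OF l2] IH1 IH2 by simp
  have NN: "2 * N * N = 2 ^ (2 ^ Suc d - 1)"
  proof -
    have "2 * N * N = 2 ^ (1 + (2^d - 1) + (2^d - 1))" unfolding N_def by (simp only: power_add power_one_right)
    also have "1 + (2^d - 1) + (2^d - 1) = (2::nat) ^ Suc d - 1"
      using one_le_power[of "2::nat" d] by simp
    finally show ?thesis .
  qed
  show ?case
  proof (intro conjI)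
    show "finite (votes (balT (Suc d) s))" unfolding V using fin by simp
    show "card (votes (balT (Suc d) s)) = 2 ^ (2 ^ Suc d - 1)" using cardV NN by simp
    show "\<forall>v\<in>votes (balT (Suc d) s). length v = 2 ^ Suc d \<and> set v = {s..<s + 2 ^ Suc d}"
    proof
      fix v assume "v \<in> votes (balT (Suc d) s)"
      then consider a b where "a \<in> V1" "b \<in> V2" "v = a @ b" | a b where "a \<in> V2" "b \<in> V1" "v = a @ b"
        unfolding V app2_def by auto
      then show "length v = 2 ^ Suc d \<and> set v = {s..<s + 2 ^ Suc d}"
        by cases (use IH1 IH2 in \<open>auto\<close>)
    qed
    show "\<forall>k<2 ^ Suc d. \<forall>c. 2 ^ Suc d * card {v \<in> votes (balT (Suc d) s). v ! k = c} =
        (if c \<in> {s..<s + 2 ^ Suc d} then card (votes (balT (Suc d) s)) else 0)"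
    proof (intro allI impI)
      fix k :: nat and c :: nat assume k: "k < 2 ^ Suc d"
      have cs: "card {v \<in> votes (balT (Suc d) s). v ! k = c} =
         card {v\<in>app2 V1 V2. v ! k = c} + card {v\<in>app2 V2 V1. v ! k = c}"
        unfolding V by (rule filter_Un_card[OF fin disj])
      have r: "c \<in> {s..<s + 2 ^ Suc d} \<longleftrightarrow> c \<in> {s..<s + 2 ^ d} \<or> c \<in> {s+2^d..<s + 2^d + 2 ^ d}"
        by auto
      have disjr: "\<not> (c \<in> {s..<s + 2 ^ d} \<and> c \<in> {s+2^d..<s + 2^d + 2 ^ d})" by auto
      show "2 ^ Suc d * card {v \<in> votes (balT (Suc d) s). v ! k = c} =
        (if c \<in> {s..<s + 2 ^ Suc d} then card (votes (balT (Suc d) s)) else 0)"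
      proof (cases "k < 2^d")
        case True
        have "2 ^ Suc d * card {v \<in> votes (balT (Suc d) s). v ! k = c}
          = 2 * N * (2^d * card {v\<in>V1. v ! k = c}) + 2 * N * (2^d * card {v\<in>V2. v ! k = c})"
          unfolding cs card_app2_nth[OF l1] card_app2_nth[OF l2] using True IH1 IH2
          by (simp add: algebra_simps)
        then show ?thesis using IH1(4) IH2(4) True r disjr cardV by auto
      next
        case False
        then have k': "k - 2^d < 2^d" using k by simp
        have "2 ^ Suc d * card {v \<in> votes (balT (Suc d) s). v ! k = c}
          = 2 * N * (2^d * card {v\<in>V2. v ! (k - 2^d) = c}) + 2 * N * (2^d * card {v\<in>V1. v ! (k-2^d) = c})"
          unfolding cs card_app2_nth[OF l1] card_app2_nth[OF l2] using False IH1 IH2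
          by (simp add: algebra_simps)
        then show ?thesis using IH1(4) IH2(4) k' r disjr cardV by auto
      qed
    qed
  qed
qed

definition fcp :: "nat \<Rightarrow> nat \<Rightarrow> nat \<Rightarrow> real" where
  "fcp m j i = 1 / 2 ^ j * real ((j - 1) choose (i - 1)) * of_bool (i \<le> j)
            + 1 / 2 ^ j * real ((j - 1) choose ((i - 1) - (m - j))) * of_bool (i > m - j)"

lemma fcp_rec:
  assumes "1 \<le> i" "i \<le> n + 2" "2 \<le> j" "j \<le> n + 2"
  shows "2 * fcp (n+2) j i = of_bool (i \<ge> 2) * fcp (n+1) (j-1) (i-1) + of_bool (i \<le> n+1) * fcp (n+1) (j-1) i"
proof -
  obtain a where a: "j = a + 2" using assms by (intro that[of "j-2"]) arith
  define p where "p = n - a"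
  have np: "n = a + p" using assms a p_def by simp
  have e1: "real (((a+1) choose (i-1)) * of_bool (i \<le> a+2)) =
     real (of_bool (i \<ge> 2) * (a choose (i-2)) * of_bool (i \<le> a+2) + of_bool (i \<le> a+1+p) * (a choose (i-1)) * of_bool (i \<le> a+1))"
    using I1[of i a p] assms np by simp
  have e2: "real (((a+1) choose ((i-1)-p)) * of_bool (i > p)) =
     real (of_bool (i \<ge> 2) * (a choose ((i-2)-p)) * of_bool (i > p+1) + of_bool (i \<le> a+1+p) * (a choose ((i-1)-p)) * of_bool (i > p))"
    using I2[of i a p] assms np by simp
  have e1': "real ((a+1) choose (i-1)) * of_bool (i \<le> a+2) =
     of_bool (i \<ge> 2) * real (a choose (i-2)) * of_bool (i \<le> a+2) + of_bool (i \<le> a+1+p) * real (a choose (i-1)) * of_bool (i \<le> a+1)"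
    using e1 by (simp only: of_nat_add of_nat_mult of_nat_of_bool)
  have e2': "real ((a+1) choose ((i-1)-p)) * of_bool (i > p) =
     of_bool (i \<ge> 2) * real (a choose ((i-2)-p)) * of_bool (i > p+1) + of_bool (i \<le> a+1+p) * real (a choose ((i-1)-p)) * of_bool (i > p)"
    using e2 by (simp only: of_nat_add of_nat_mult of_nat_of_bool)
  have L: "2 * fcp (n+2) j i = (real ((a+1) choose (i-1)) * of_bool (i \<le> a+2) + real ((a+1) choose ((i-1)-p)) * of_bool (i > p)) / 2^(a+1)"
    unfolding fcp_def a np by (simp add: field_simps)
  have R1: "of_bool (i \<ge> 2) * fcp (n+1) (j-1) (i-1) = of_bool (i \<ge> 2) * (real (a choose (i-2)) * of_bool (i \<le> a+2) + real (a choose ((i-2)-p)) * of_bool (i > p+1)) / 2^(a+1)"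
    unfolding fcp_def a np by (cases "i \<ge> 2") (auto simp: field_simps numeral_2_eq_2)
  have R2: "of_bool (i \<le> n+1) * fcp (n+1) (j-1) i = of_bool (i \<le> a+1+p) * (real (a choose (i-1)) * of_bool (i \<le> a+1) + real (a choose ((i-1)-p)) * of_bool (i > p)) / 2^(a+1)"
    unfolding fcp_def a np by (simp add: field_simps)
  show ?thesis unfolding L R1 R2 e1' e2' by (simp add: field_simps)
qed

lemma cat_Cons: "ys \<noteq> [] \<Longrightarrow> cat (a # ys) = Nd [Lf a, cat ys]"
proof (cases ys)
  case (Cons b rest)
  then show ?thesis by (cases rest) auto
qed simp

lemma cp_inv:
  "finite (votes (cat [s..<s + Suc n])) \<and> card (votes (cat [s..<s + Suc n])) = 2 ^ n
   \<and> (\<forall>v\<in>votes (cat [s..<s + Suc n]). length v = Suc n \<and> set v = {s..<s + Suc n})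
   \<and> (\<forall>j\<in>{1..Suc n}. \<forall>i\<in>{1..Suc n}.
         real (card {v\<in>votes (cat [s..<s + Suc n]). v ! (i - 1) = s + j - 1}) = 2 ^ n * fcp (Suc n) j i)"
proof (induction n arbitrary: s)
  case 0
  then show ?case by (auto simp: fcp_def)
next
  case (Suc n)
  define V where "V = votes (cat [Suc s..<Suc s + Suc n])"
  have IH: "finite V" "card V = 2 ^ n" "\<forall>v\<in>V. length v = Suc n \<and> set v = {Suc s..<Suc s + Suc n}"
    "\<forall>j\<in>{1..Suc n}. \<forall>i\<in>{1..Suc n}.
         real (card {v\<in>V. v ! (i - 1) = Suc s + j - 1}) = 2 ^ n * fcp (Suc n) j i"
    using Suc[of "Suc s"] unfolding V_def by auto
  have up: "[s..<s + Suc (Suc n)] = s # [Suc s..<Suc s + Suc n]"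
    by (simp add: upt_rec)
  have VV: "votes (cat [s..<s + Suc (Suc n)]) = app2 {[s]} V \<union> app2 V {[s]}"
  proof -
    have ce: "cat [s..<s + Suc (Suc n)] = Nd [Lf s, cat [Suc s..<Suc s + Suc n]]"
      unfolding up by (rule cat_Cons) simp
    show ?thesis unfolding ce votes_Nd2 votes.simps(1) V_def ..
  qed
  have l0: "\<forall>a\<in>{[s]}. length a = 1" by simp
  have l1: "\<forall>a\<in>V. length a = Suc n" using IH by auto
  have disj: "app2 {[s]} V \<inter> app2 V {[s]} = {}"
  proof (rule ccontr)
    assume "app2 {[s]} V \<inter> app2 V {[s]} \<noteq> {}"
    then obtain v w where vw: "v \<in> V" "w \<in> V" "s # v = w @ [s]"
      unfolding app2_def by auto
    have "v \<noteq> []" using vw l1 by auto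
    then have "last v = s" using vw by (metis last_ConsR last_snoc)
    then have "s \<in> set v" using \<open>v \<noteq> []\<close> by auto
    then show False using vw IH by auto
  qed
  have fin: "finite (app2 {[s]} V)" "finite (app2 V {[s]})" using IH by (auto intro: finite_app2)
  show ?case
  proof (intro conjI)
    show "finite (votes (cat [s..<s + Suc (Suc n)]))" unfolding VV using fin by simp
    show "card (votes (cat [s..<s + Suc (Suc n)])) = 2 ^ Suc n"
      unfolding VV using card_Un_disjoint[OF fin disj] card_app2[OF l0] card_app2[OF l1] IH by simp
    show "\<forall>v\<in>votes (cat [s..<s + Suc (Suc n)]). length v = Suc (Suc n) \<and> set v = {s..<s + Suc (Suc n)}"
      unfolding VV app2_def using IH by auto
    show "\<forall>j\<in>{1..Suc (Suc n)}. \<forall>i\<in>{1..Suc (Suc n)}.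
       real (card {v \<in> votes (cat [s..<s + Suc (Suc n)]). v ! (i - 1) = s + j - 1}) = 2 ^ Suc n * fcp (Suc (Suc n)) j i"
    proof (intro ballI)
      fix j i assume j: "j \<in> {1..Suc (Suc n)}" and i: "i \<in> {1..Suc (Suc n)}"
      define c where "c = s + j - 1"
      have cs: "card {v \<in> votes (cat [s..<s + Suc (Suc n)]). v ! (i - 1) = c} =
         (if i - 1 < 1 then card {a\<in>{[s]}. a ! (i - 1) = c} * 2 ^ n else card {b\<in>V. b ! (i - 1 - 1) = c})
       + (if i - 1 < Suc n then card {a\<in>V. a ! (i - 1) = c} else 2 ^ n * card {b\<in>{[s]}. b ! (i - 1 - Suc n) = c})"
        unfolding VV filter_Un_card[OF fin disj] card_app2_nth[OF l0] card_app2_nth[OF l1] using IH by simp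
      show "real (card {v \<in> votes (cat [s..<s + Suc (Suc n)]). v ! (i - 1) = s + j - 1}) = 2 ^ Suc n * fcp (Suc (Suc n)) j i"
      proof (cases "j = 1")
        case True
        then have cs': "c = s" unfolding c_def by simp
        have z: "card {a\<in>V. a ! k = s} = 0" if "k < Suc n" for k
        proof -
          have "{a\<in>V. a ! k = s} = {}"
          proof (rule ccontr)
            assume "{a\<in>V. a ! k = s} \<noteq> {}"
            then obtain a where "a \<in> V" "a ! k = s" by auto
            moreover have la: "length a = Suc n" using IH(3) \<open>a \<in> V\<close> by auto
            ultimately have "s \<in> set a" using nth_mem[of k a] that by simp
            then show False using IH(3) \<open>a \<in> V\<close> by auto
          qed
          then show ?thesis by (metis card.empty)
        qed
        have "card {v \<in> votes (cat [s..<s + Suc (Suc n)]). v ! (i - 1) = c} =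
           (if i = 1 then 2 ^ n else 0) + (if i = Suc (Suc n) then 2 ^ n else 0)"
        proof -
          consider "i = 1" | "2 \<le> i" "i \<le> Suc n" | "i = Suc (Suc n)" using i by fastforce
          then show ?thesis
          proof cases
            case 1
            then show ?thesis unfolding cs unfolding cs' using z[of 0] by simp
          next
            case 2
            then show ?thesis unfolding cs unfolding cs' using z[of "i-1"] z[of "i-1-1"] by simp
          next
            case 3
            then show ?thesis unfolding cs unfolding cs' using z[of "n"] by simp
          qed
        qed
        then show ?thesis using i True unfolding c_def fcp_def by (auto simp: binomial_eq_0)
      next
        case False
        then have j2: "2 \<le> j" using j by simp
        have cc: "c = Suc s + (j - 1) - 1" unfolding c_def using j2 by simp
        have A: "i \<ge> 2 \<Longrightarrow> real (card {b\<in>V. b ! (i - 1 - 1) = c}) = 2 ^ n * fcp (Suc n) (j-1) (i-1)"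
        proof -
          assume "i \<ge> 2"
          then have h: "j - 1 \<in> {1..Suc n}" "i - 1 \<in> {1..Suc n}" using i j j2 by auto
          show ?thesis unfolding cc using IH(4) h by blast
        qed
        have B: "i \<le> Suc n \<Longrightarrow> real (card {b\<in>V. b ! (i - 1) = c}) = 2 ^ n * fcp (Suc n) (j-1) i"
        proof -
          assume "i \<le> Suc n"
          then have h: "j - 1 \<in> {1..Suc n}" "i \<in> {1..Suc n}" using i j j2 by auto
          show ?thesis unfolding cc using IH(4) h by blast
        qed
        have "real (card {v \<in> votes (cat [s..<s + Suc (Suc n)]). v ! (i - 1) = c}) =
          of_bool (i \<ge> 2) * (2 ^ n * fcp (Suc n) (j-1) (i-1)) + of_bool (i \<le> Suc n) * (2 ^ n * fcp (Suc n) (j-1) i)"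
          unfolding cs using A B i j2 unfolding c_def by auto
        also have "\<dots> = 2 ^ n * (2 * fcp (n + 2) j i)"
          using fcp_rec[of i n j] i j j2 by (simp add: algebra_simps)
        finally show ?thesis unfolding c_def by simp
      qed
    qed
  qed
qed


lemma card_two_filter: "x \<noteq> y \<Longrightarrow> card {v\<in>{x,y}. P v} = of_bool (P x) + of_bool (P y)"
proof -
  assume ne: "x \<noteq> y"
  have e: "{v\<in>{x,y}. P v} = (if P x then {x} else {}) \<union> (if P y then {y} else {})" by auto
  show ?thesis unfolding e using ne by (cases "P x"; cases "P y") auto
qed

theorem theorem1:
  fixes m :: nat
  assumes "m \<ge> 2"
  shows "(\<forall>i\<in>{1..m}. \<forall>j\<in>{1..m}.
            freq (Flat m) i j = 1/2 * of_bool (i = j) + 1/2 * of_bool (i = m - j + 1))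
       \<and> (\<forall>k. m = 2 ^ k \<longrightarrow> (\<forall>i\<in>{1..m}. \<forall>j\<in>{1..m}. freq (Bal k) i j = 1 / real m))
       \<and> (\<forall>j\<in>{1..m}. \<forall>i\<in>{1..m}.
            freq (CP m) i j =
              1 / 2 ^ j * real ((j - 1) choose (i - 1)) * of_bool (i \<le> j)
            + 1 / 2 ^ j * real ((j - 1) choose ((i - 1) - (m - j))) * of_bool (i > m - j))"
proof (intro conjI)
  show "\<forall>i\<in>{1..m}. \<forall>j\<in>{1..m}.
            freq (Flat m) i j = 1/2 * of_bool (i = j) + 1/2 * of_bool (i = m - j + 1)"
  proof (intro ballI)
    fix i j assume i: "i \<in> {1..m}" and j: "j \<in> {1..m}"
    define xs where "xs = [1..<m+1]"
    have ne: "xs \<noteq> rev xs"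
    proof
      assume "xs = rev xs"
      then have "xs ! 0 = rev xs ! 0" by simp
      moreover have "xs ! 0 = 1" unfolding xs_def using assms by (simp add: nth_upt del: upt_Suc)
      moreover have "rev xs ! 0 = m" unfolding xs_def using assms by (simp add: rev_nth nth_upt del: upt_Suc)
      ultimately show False using assms by simp
    qed
    have V: "votes (Flat m) = {xs, rev xs}" unfolding xs_def by (rule votes_Flat)
    have n1: "xs ! (i - 1) = i" using i unfolding xs_def by (simp add: nth_upt del: upt_Suc)
    have n2: "rev xs ! (i - 1) = m - i + 1" using i unfolding xs_def by (subst rev_nth) (auto simp: nth_upt simp del: upt_Suc)
    have "freq (Flat m) i j = card {v\<in>{xs, rev xs}. v ! (i-1) = j} / card {xs, rev xs}"
      using freq_eq[of "Flat m" i j] V by simp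
    also have "\<dots> = (of_bool (i = j) + of_bool (m - i + 1 = j)) / 2"
      unfolding card_two_filter[OF ne] using ne n1 n2 by simp
    also have "\<dots> = 1/2 * of_bool (i = j) + 1/2 * of_bool (i = m - j + 1)"
    proof -
      have "(m - i + 1 = j) = (i = m - j + 1)" using i j by auto
      then show ?thesis by simp
    qed
    finally show "freq (Flat m) i j = 1/2 * of_bool (i = j) + 1/2 * of_bool (i = m - j + 1)" .
  qed
  show "\<forall>k. m = 2 ^ k \<longrightarrow> (\<forall>i\<in>{1..m}. \<forall>j\<in>{1..m}. freq (Bal k) i j = 1 / real m)"
  proof (intro allI impI ballI)
    fix k i j assume mk: "m = 2 ^ k" and i: "i \<in> {1..m}" and j: "j \<in> {1..m}"
    note B = bal_inv[of k 1]
    have fin: "finite (votes (Bal k))" and cne: "card (votes (Bal k)) > 0"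
      using B unfolding Bal_def by auto
    have ne: "votes (Bal k) \<noteq> {}" using cne by auto
    have "2 ^ k * card {v\<in>votes (Bal k). v ! (i - 1) = j} = card (votes (Bal k))"
      using B i j mk unfolding Bal_def by auto
    then have "real m * real (card {v\<in>votes (Bal k). v ! (i - 1) = j}) = real (card (votes (Bal k)))"
      unfolding mk by (metis of_nat_mult of_nat_numeral of_nat_power)
    then show "freq (Bal k) i j = 1 / real m"
      unfolding freq_eq[OF fin ne] using cne mk by (simp add: field_simps)
  qed
  show "\<forall>j\<in>{1..m}. \<forall>i\<in>{1..m}.
            freq (CP m) i j =
              1 / 2 ^ j * real ((j - 1) choose (i - 1)) * of_bool (i \<le> j)
            + 1 / 2 ^ j * real ((j - 1) choose ((i - 1) - (m - j))) * of_bool (i > m - j)"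
  proof (intro ballI)
    fix j i assume j: "j \<in> {1..m}" and i: "i \<in> {1..m}"
    define n where "n = m - 1"
    have mn: "m = Suc n" using assms n_def by simp
    have cpe: "CP m = cat [1..<1 + Suc n]" unfolding CP_def mn by simp
    note C = cp_inv[of 1 n, folded cpe]
    have fin: "finite (votes (CP m))" and cd: "card (votes (CP m)) = 2 ^ n"
      using C by auto
    have ne: "votes (CP m) \<noteq> {}" using cd fin by auto
    have "real (card {v\<in>votes (CP m). v ! (i - 1) = j}) = 2 ^ n * fcp m j i"
    proof -
      have "i \<in> {1..Suc n}" "j \<in> {1..Suc n}" using i j mn by auto
      then have "real (card {v\<in>votes (CP m). v ! (i - 1) = 1 + j - 1}) = 2 ^ n * fcp (Suc n) j i"
        using C by blast
      then show ?thesis using mn by simp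
    qed
    then have "freq (CP m) i j = fcp m j i"
      unfolding freq_eq[OF fin ne] cd by simp
    then show "freq (CP m) i j =
              1 / 2 ^ j * real ((j - 1) choose (i - 1)) * of_bool (i \<le> j)
            + 1 / 2 ^ j * real ((j - 1) choose ((i - 1) - (m - j))) * of_bool (i > m - j)"
      unfolding fcp_def .
  qed
qed

end
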